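(* Let $(\sigma,\rho)$ and $(\nu,\varrho)$ be two $G$-compatible pairs. The lattices $L_{(\sigma,\rho)}=\sigma^{-1}\mathbb Z^n\rtimes_\eta\rho\mathbb Z^m$ and $L_{(\nu,\varrho)}=\nu^{-1}\mathbb Z^n\rtimes_\eta\varrho\mathbb Z^m$ are commensurable if and only if $\nu\sigma^{-1}\in GL_n(\mathbb Q)$ and $\varrho^{-1}\rho\in GL_m(\mathbb Q)$.
   Context: Fix integers $1\le m\le n$. Let $\Delta_1,\dots,\Delta_m\in\mathbb R^{n\times n}$ be linearly independent, nonsingular, traceless diagonal matrices $\Delta_i=\mathrm{diag}(d_1^{(i)},\dots,d_n^{(i)})$ such that for each $i$, $d_k^{(i)}\neq d_j^{(i)}$ whenever $k\neq j$. For $t=(t_1,\dots,t_m)^T\in\mathbb R^m$ write $t\cdot\Delta=\sum_{i=1}^m t_i\Delta_i$ and $\eta(t)=e^{t\cdot\Delta}$. Let $G=\mathbb R^n\rtimes_\eta\mathbb R^m$ be the Lie group with underlying set $\mathbb R^n\times\mathbb R^m$ and multiplication $(x,t)(y,s)=(x+e^{t\cdot\Delta}y,\ t+s)$. A pair $(\sigma,\rho)\in GL_n(\mathbb R)\times GL_m(\mathbb R)$ is called $G$-compatible if $\sigma\exp(\rho^{(j)}\cdot\Delta)\sigma^{-1}\in SL_n(\mathbb Z)$ for all $j=1,\dots,m$, where $\rho^{(j)}$ is the $j$-th column of $\rho$. For such a pair, $\sigma^{-1}\mathbb Z^n\rtimes_\eta\rho\mathbb Z^m$ denotes the subgroup $\{(\sigma^{-1}v,\rho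 p): v\in\mathbb Z^n, p\in\mathbb Z^m\}$ of $G$, which is a lattice. Two lattices $\Gamma,\Gamma'$ in $G$ are commensurable if $[\Gamma:\Gamma\cap\Gamma']<\infty$ and $[\Gamma':\Gamma\cap\Gamma']<\infty$. *)

theory Defs
  imports "HOL-Analysis.Analysis"
begin

definition is_diag_mat :: "real^'n^'n \<Rightarrow> bool" where
  "is_diag_mat A \<longleftrightarrow> (\<forall>j k. j \<noteq> k \<longrightarrow> A $ j $ k = 0)"

text \<open>eta(t) = exp(t . Delta) for diagonal Delta_i; the exponential of the diagonal
  matrix t . Delta is the diagonal matrix of the exponentials of its diagonal entries.\<close>
definition eta :: "('m::finite \<Rightarrow> real^'n^'n) \<Rightarrow> real^'m \<Rightarrow> real^'n^'n" where
  "eta \<Delta> t = (\<chi> j k. if j = k then exp (\<Sum>i\<in>UNIV. t $ i * \<Delta> i $ j $ j) else 0)"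

definition Gmult :: "('m::finite \<Rightarrow> real^'n^'n) \<Rightarrow> ((real^'n) \<times> (real^'m))
     \<Rightarrow> ((real^'n) \<times> (real^'m)) \<Rightarrow> ((real^'n) \<times> (real^'m))" where
  "Gmult \<Delta> a b = (fst a + eta \<Delta> (snd a) *v fst b, snd a + snd b)"

definition int_vec :: "real^'k \<Rightarrow> bool" where
  "int_vec v \<longleftrightarrow> (\<forall>k. v $ k \<in> \<int>)"

definition in_SL_Z :: "real^'n^'n \<Rightarrow> bool" where
  "in_SL_Z A \<longleftrightarrow> (\<forall>j k. A $ j $ k \<in> \<int>) \<and> det A = 1"

definition rat_mat :: "real^'n^'n \<Rightarrow> bool" where
  "rat_mat A \<longleftrightarrow> (\<forall>j k. A $ j $ k \<in> \<rat>)"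

definition G_compatible :: "('m::finite \<Rightarrow> real^'n^'n) \<Rightarrow> real^'n^'n \<Rightarrow> real^'m^'m \<Rightarrow> bool" where
  "G_compatible \<Delta> \<sigma> \<rho> \<longleftrightarrow> invertible \<sigma> \<and> invertible \<rho> \<and>
     (\<forall>j. in_SL_Z (\<sigma> ** eta \<Delta> (column j \<rho>) ** matrix_inv \<sigma>))"

definition lattice :: "real^'n^'n \<Rightarrow> real^'m^'m \<Rightarrow> ((real^'n) \<times> (real^'m)) set" where
  "lattice \<sigma> \<rho> = {(matrix_inv \<sigma> *v v, \<rho> *v p) | v p. int_vec v \<and> int_vec p}"

definition lcosets :: "('a \<Rightarrow> 'a \<Rightarrow> 'a) \<Rightarrow> 'a set \<Rightarrow> 'a set \<Rightarrow> 'a set set" where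
  "lcosets gmul A H = {(\<lambda>h. gmul a h) ` H | a. a \<in> A}"

definition commensurable :: "('a \<Rightarrow> 'a \<Rightarrow> 'a) \<Rightarrow> 'a set \<Rightarrow> 'a set \<Rightarrow> bool" where
  "commensurable gmul \<Gamma> \<Gamma>' \<longleftrightarrow>
     finite (lcosets gmul \<Gamma> (\<Gamma> \<inter> \<Gamma>')) \<and> finite (lcosets gmul \<Gamma>' (\<Gamma> \<inter> \<Gamma>'))"

end

theory Submission
  imports Defs
begin

lemma minv:
  fixes A :: "real^'n^'n"
  assumes "invertible A"
  shows "A ** matrix_inv A = mat 1" "matrix_inv A ** A = mat 1"
proof -
  have "\<exists>A'. A ** A' = mat 1 \<and> A' ** A = mat 1" using assms by (simp add: invertible_def)
  then have "A ** matrix_inv A = mat 1 \<and> matrix_inv A ** A = mat 1"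
    unfolding matrix_inv_def by (rule someI_ex)
  then show "A ** matrix_inv A = mat 1" "matrix_inv A ** A = mat 1" by auto
qed

lemma eta_add: "eta \<Delta> (s + t) = eta \<Delta> s ** eta \<Delta> t"
proof -
  have aux: "\<And>(j::'n::finite) l f g. (\<Sum>k\<in>UNIV. (if j = k then f k else (0::real)) * (if k = l then g k else 0))
     = (if j = l then f j * g j else 0)"
  proof -
    fix j l :: "'n::finite" and f g
    have "\<And>k. (if j = k then f k else (0::real)) * (if k = l then g k else 0) = (if k = j then (if j = l then f j * g j else 0) else 0)"
      by auto
    note eq = this
    show "(\<Sum>k\<in>UNIV. (if j = k then f k else (0::real)) * (if k = l then g k else 0))
     = (if j = l then f j * g j else 0)" apply (simp only: eq) apply (cases "j = l") apply auto done
  qed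
  show ?thesis
    unfolding eta_def matrix_matrix_mult_def
    by (simp add: vec_eq_iff aux distrib_right sum.distrib exp_add)
qed

lemma eta_zero: "eta \<Delta> 0 = mat 1"
  unfolding eta_def by (simp add: vec_eq_iff mat_def)

lemma eta_neg: "eta \<Delta> t ** eta \<Delta> (-t) = mat 1" "eta \<Delta> (-t) ** eta \<Delta> t = mat 1"
  by (metis eta_add eta_zero add.right_inverse add.left_inverse)+

definition int_mat :: "real^'n^'m \<Rightarrow> bool" where
  "int_mat A \<longleftrightarrow> (\<forall>j k. A $ j $ k \<in> \<int>)"

lemma int_mat_mult: "int_mat A \<Longrightarrow> int_mat B \<Longrightarrow> int_mat (A ** B)"
  unfolding int_mat_def matrix_matrix_mult_def by (auto intro!: Ints_sum Ints_mult)

lemma int_mat_vec: "int_mat A \<Longrightarrow> int_vec v \<Longrightarrow> int_vec (A *v v)"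
  unfolding int_mat_def int_vec_def matrix_vector_mult_def by (auto intro!: Ints_sum Ints_mult)

lemma int_vec_add: "int_vec a \<Longrightarrow> int_vec b \<Longrightarrow> int_vec (a + b)"
  unfolding int_vec_def by auto
lemma int_vec_diff: "int_vec a \<Longrightarrow> int_vec b \<Longrightarrow> int_vec (a - b)"
  unfolding int_vec_def by auto
lemma int_vec_neg: "int_vec a \<Longrightarrow> int_vec (- a)"
  unfolding int_vec_def by auto
lemma int_vec_zero: "int_vec 0"
  unfolding int_vec_def by auto
lemma int_vec_scale: "int_vec a \<Longrightarrow> int_vec (of_int D *\<^sub>R a)"
  unfolding int_vec_def by auto
lemma int_vec_scale_nat: "int_vec a \<Longrightarrow> int_vec (of_nat D *\<^sub>R a)"
  unfolding int_vec_def by auto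
lemma int_vec_axis: "int_vec (axis l (1::real))"
  unfolding int_vec_def axis_def by auto

lemma det_int: "int_mat A \<Longrightarrow> det A \<in> \<int>"
  unfolding int_mat_def det_def by (auto intro!: Ints_sum Ints_mult Ints_prod)

lemma det_rat: "rat_mat A \<Longrightarrow> det A \<in> \<rat>"
  unfolding rat_mat_def det_def by (auto intro!: Rats_sum Rats_mult Rats_prod)

lemma int_inv:
  fixes B C :: "real^'n^'n"
  assumes "int_mat B" "det B = 1" "B ** C = mat 1"
  shows "int_mat C"
  unfolding int_mat_def
proof (intro allI)
  fix k l
  let ?x = "C *v axis l 1"
  have "B *v ?x = axis l 1" by (simp add: matrix_vector_mul_assoc assms(3))
  have "det((\<chi> i j. if j = k then (B *v ?x)$i else B$i$j):: real^'n^'n) = ?x$k * det B"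
    by (rule cramer_lemma)
  moreover have "int_mat ((\<chi> i j. if j = k then (B *v ?x)$i else B$i$j):: real^'n^'n)"
    using assms(1) \<open>B *v ?x = axis l 1\<close> by (auto simp: int_mat_def axis_def)
  ultimately have "?x $ k \<in> \<int>" using det_int assms(2) by force
  then show "C $ k $ l \<in> \<int>" by (simp add: matrix_vector_mult_basis column_def)
qed

lemma rat_inv:
  fixes B C :: "real^'n^'n"
  assumes "rat_mat B" "B ** C = mat 1"
  shows "rat_mat C"
  unfolding rat_mat_def
proof (intro allI)
  fix k l
  let ?x = "C *v axis l 1"
  have "det B * det C = 1" using assms(2) by (metis det_mul det_I)
  then have nz: "det B \<noteq> 0" by auto
  have "B *v ?x = axis l 1" by (simp add: matrix_vector_mul_assoc assms(2))
  have "det((\<chi> i j. if j = k then (B *v ?x)$i else B$i$j):: real^'n^'n) = ?x$k * det B"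
    by (rule cramer_lemma)
  moreover have "rat_mat ((\<chi> i j. if j = k then (B *v ?x)$i else B$i$j):: real^'n^'n)"
    using assms(1) \<open>B *v ?x = axis l 1\<close> by (auto simp: rat_mat_def axis_def)
  ultimately have "?x $ k = det ((\<chi> i j. if j = k then (B *v ?x)$i else B$i$j):: real^'n^'n) / det B"
    (is "_ = ?d / _") using nz by simp
  moreover have "?d \<in> \<rat>" using det_rat \<open>rat_mat (\<chi> i j. _)\<close> by blast
  moreover have "det B \<in> \<rat>" using det_rat[OF assms(1)] .
  ultimately have "?x $ k \<in> \<rat>" by (simp only: Rats_divide)
  then show "C $ k $ l \<in> \<rat>" by (simp add: matrix_vector_mult_basis column_def)
qed

lemma conj_add:
  fixes \<sigma> :: "real^'n^'n"
  assumes "invertible \<sigma>"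
  shows "\<sigma> ** eta \<Delta> (s + t) ** matrix_inv \<sigma> =
         (\<sigma> ** eta \<Delta> s ** matrix_inv \<sigma>) ** (\<sigma> ** eta \<Delta> t ** matrix_inv \<sigma>)"
proof -
  have "(\<sigma> ** eta \<Delta> s ** matrix_inv \<sigma>) ** (\<sigma> ** eta \<Delta> t ** matrix_inv \<sigma>)
     = \<sigma> ** eta \<Delta> s ** (matrix_inv \<sigma> ** \<sigma>) ** eta \<Delta> t ** matrix_inv \<sigma>"
    by (simp add: matrix_mul_assoc)
  also have "\<dots> = \<sigma> ** eta \<Delta> (s + t) ** matrix_inv \<sigma>"
    by (simp add: minv[OF assms] eta_add matrix_mul_assoc)
  finally show ?thesis by simp
qed

lemma conj_zero:
  fixes \<sigma> :: "real^'n^'n"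
  assumes "invertible \<sigma>"
  shows "\<sigma> ** eta \<Delta> 0 ** matrix_inv \<sigma> = mat 1"
  by (simp add: eta_zero minv[OF assms])

lemma int_mat_one: "int_mat (mat 1)"
  unfolding int_mat_def mat_def by auto

lemma lattice_iff:
  fixes \<sigma> :: "real^'n::finite^'n" and \<rho> :: "real^'m::finite^'m"
  assumes "invertible \<sigma>" "invertible \<rho>"
  shows "(x, t) \<in> lattice \<sigma> \<rho> \<longleftrightarrow> int_vec (\<sigma> *v x) \<and> int_vec (matrix_inv \<rho> *v t)"
proof
  assume "(x, t) \<in> lattice \<sigma> \<rho>"
  then obtain v p where "x = matrix_inv \<sigma> *v v" "t = \<rho> *v p" "int_vec v" "int_vec p"
    unfolding lattice_def by auto
  then show "int_vec (\<sigma> *v x) \<and> int_vec (matrix_inv \<rho> *v t)"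
    by (simp add: matrix_vector_mul_assoc minv[OF assms(1)] minv[OF assms(2)])
next
  assume a: "int_vec (\<sigma> *v x) \<and> int_vec (matrix_inv \<rho> *v t)"
  have "x = matrix_inv \<sigma> *v (\<sigma> *v x)" "t = \<rho> *v (matrix_inv \<rho> *v t)"
    by (simp_all add: matrix_vector_mul_assoc minv[OF assms(1)] minv[OF assms(2)])
  then show "(x, t) \<in> lattice \<sigma> \<rho>" using a unfolding lattice_def by blast
qed

lemma key_lemma:
  fixes \<Delta> :: "'m::finite \<Rightarrow> real^'n::finite^'n" and \<sigma> :: "real^'n^'n" and \<rho> :: "real^'m^'m"
  assumes comp: "G_compatible \<Delta> \<sigma> \<rho>" and q: "int_vec q"
  shows "int_mat (\<sigma> ** eta \<Delta> (\<rho> *v q) ** matrix_inv \<sigma>)"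
proof -
  have inv: "invertible \<sigma>" using comp by (simp add: G_compatible_def)
  define P where "P s \<longleftrightarrow> int_mat (\<sigma> ** eta \<Delta> s ** matrix_inv \<sigma>)" for s
  define Q where "Q s \<longleftrightarrow> P s \<and> P (-s)" for s
  have Q0: "Q 0" by (simp add: Q_def P_def conj_zero[OF inv] int_mat_one)
  have Qadd: "Q (s + t)" if "Q s" "Q t" for s t
  proof -
    have "P (s + t)" unfolding P_def conj_add[OF inv]
      by (rule int_mat_mult) (use that in \<open>simp_all add: Q_def P_def\<close>)
    moreover have "P (- s + - t)" unfolding P_def conj_add[OF inv]
      by (rule int_mat_mult) (use that in \<open>simp_all add: Q_def P_def\<close>)
    moreover have "- (s + t) = - s + - t" by simp
    ultimately show ?thesis unfolding Q_def by metis
  qed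
  have Qneg: "Q (- s)" if "Q s" for s using that unfolding Q_def by simp
  have Qnat: "Q (of_nat k *\<^sub>R s)" if "Q s" for s k
  proof (induction k)
    case 0 then show ?case using Q0 by simp
  next
    case (Suc k)
    have "of_nat (Suc k) *\<^sub>R s = s + of_nat k *\<^sub>R s" by (simp add: algebra_simps)
    then show ?case using Qadd[OF that Suc] by simp
  qed
  have Qint: "Q (of_int k *\<^sub>R s)" if "Q s" for s k
  proof (cases "k \<ge> 0")
    case True
    then have "(of_int k :: real) = of_nat (nat k)" by simp
    then show ?thesis using Qnat[OF that, of "nat k"] by (simp only:)
  next
    case False
    then obtain n where kn: "k = - int n" by (metis nonneg_int_cases neg_0_le_iff_le le_cases minus_minus)
    then have "of_int k *\<^sub>R s = - (of_nat n *\<^sub>R s)" by simp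
    then show ?thesis using Qneg[OF Qnat[OF that, of n]] by (simp only:)
  qed
  have Qcol: "Q (column j \<rho>)" for j
  proof -
    have B: "in_SL_Z (\<sigma> ** eta \<Delta> (column j \<rho>) ** matrix_inv \<sigma>)"
      using comp by (simp add: G_compatible_def)
    then have P1: "P (column j \<rho>)" by (simp add: P_def in_SL_Z_def int_mat_def)
    have "(\<sigma> ** eta \<Delta> (column j \<rho>) ** matrix_inv \<sigma>) ** (\<sigma> ** eta \<Delta> (- column j \<rho>) ** matrix_inv \<sigma>) = mat 1"
      using conj_add[OF inv, of \<Delta> "column j \<rho>" "- column j \<rho>", symmetric] conj_zero[OF inv, of \<Delta>]
      by (simp only: add.right_inverse)
    then have "P (- column j \<rho>)"
      using int_inv[of "\<sigma> ** eta \<Delta> (column j \<rho>) ** matrix_inv \<sigma>"] B P1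
      by (simp add: P_def in_SL_Z_def)
    then show ?thesis using P1 by (simp add: Q_def)
  qed
  have Qsum: "Q (\<Sum>j\<in>F. f j)" if "finite F" "\<And>j. Q (f j)" for F f
    using that(1) by (induction F rule: finite_induct) (auto simp: Q0 Qadd that(2))
  have "\<rho> *v q = (\<Sum>j\<in>UNIV. of_int \<lfloor>q $ j\<rfloor> *\<^sub>R column j \<rho>)"
  proof -
    have e: "\<And>j. of_int \<lfloor>q $ j\<rfloor> = q $ j" using q unfolding int_vec_def by (metis Ints_cases floor_of_int)
    show ?thesis unfolding matrix_mult_sum scalar_mult_eq_scaleR e ..
  qed
  moreover have "Q (\<Sum>j\<in>UNIV. of_int \<lfloor>q $ j\<rfloor> *\<^sub>R column j \<rho>)"
    by (rule Qsum) (auto intro: Qint Qcol)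
  ultimately show ?thesis by (simp add: Q_def P_def)
qed

lemma mv_neg: "(A::real^'n::finite^'m) *v (- x) = - (A *v x)"
  by (simp add: matrix_vector_mult_def vec_eq_iff sum_negf)

lemma lattice_mem_t:
  fixes \<sigma> :: "real^'n::finite^'n" and \<rho> :: "real^'m::finite^'m"
  assumes "invertible \<rho>" "int_vec (matrix_inv \<rho> *v t)"
  shows "t = \<rho> *v (matrix_inv \<rho> *v t)"
  by (simp add: matrix_vector_mul_assoc minv[OF assms(1)])

lemma Gmult_closed:
  fixes \<Delta> :: "'m::finite \<Rightarrow> real^'n::finite^'n" and \<sigma> :: "real^'n^'n" and \<rho> :: "real^'m^'m"
  assumes comp: "G_compatible \<Delta> \<sigma> \<rho>" and a: "a \<in> lattice \<sigma> \<rho>" and b: "b \<in> lattice \<sigma> \<rho>"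
  shows "Gmult \<Delta> a b \<in> lattice \<sigma> \<rho>"
proof -
  have inv: "invertible \<sigma>" "invertible \<rho>" using comp by (auto simp: G_compatible_def)
  obtain x t where at: "a = (x, t)" by (cases a)
  obtain y s where bs: "b = (y, s)" by (cases b)
  have ax: "int_vec (\<sigma> *v x)" "int_vec (matrix_inv \<rho> *v t)" using a at lattice_iff[OF inv] by auto
  have bx: "int_vec (\<sigma> *v y)" "int_vec (matrix_inv \<rho> *v s)" using b bs lattice_iff[OF inv] by auto
  have K: "int_mat (\<sigma> ** eta \<Delta> t ** matrix_inv \<sigma>)"
    using key_lemma[OF comp ax(2)] lattice_mem_t[OF inv(2) ax(2)] by simp
  have "\<sigma> *v (x + eta \<Delta> t *v y) = \<sigma> *v x + (\<sigma> ** eta \<Delta> t ** matrix_inv \<sigma>) *v (\<sigma> *v y)"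
    by (simp add: matrix_vector_right_distrib matrix_vector_mul_assoc matrix_mul_assoc[symmetric] minv[OF inv(1)])
  then have 1: "int_vec (\<sigma> *v (x + eta \<Delta> t *v y))"
    using int_vec_add[OF ax(1) int_mat_vec[OF K bx(1)]] by simp
  have 2: "int_vec (matrix_inv \<rho> *v (t + s))"
    using int_vec_add[OF ax(2) bx(2)] by (simp add: matrix_vector_right_distrib)
  show ?thesis using 1 2 lattice_iff[OF inv] by (simp add: at bs Gmult_def)
qed

definition ginv :: "('m::finite \<Rightarrow> real^'n^'n) \<Rightarrow> (real^'n) \<times> (real^'m) \<Rightarrow> (real^'n) \<times> (real^'m)" where
  "ginv \<Delta> a = (- (eta \<Delta> (- snd a) *v fst a), - snd a)"

lemma ginv_closed:
  fixes \<Delta> :: "'m::finite \<Rightarrow> real^'n::finite^'n" and \<sigma> :: "real^'n^'n" and \<rho> :: "real^'m^'m"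
  assumes comp: "G_compatible \<Delta> \<sigma> \<rho>" and a: "a \<in> lattice \<sigma> \<rho>"
  shows "ginv \<Delta> a \<in> lattice \<sigma> \<rho>"
proof -
  have inv: "invertible \<sigma>" "invertible \<rho>" using comp by (auto simp: G_compatible_def)
  obtain x t where at: "a = (x, t)" by (cases a)
  have ax: "int_vec (\<sigma> *v x)" "int_vec (matrix_inv \<rho> *v t)" using a at lattice_iff[OF inv] by auto
  have ax2: "int_vec (matrix_inv \<rho> *v (-t))" using int_vec_neg[OF ax(2)]
    by (simp add: mv_neg)
  have K: "int_mat (\<sigma> ** eta \<Delta> (-t) ** matrix_inv \<sigma>)"
    using key_lemma[OF comp ax2] lattice_mem_t[OF inv(2) ax2] by simp
  have "\<sigma> *v (- (eta \<Delta> (-t) *v x)) = - ((\<sigma> ** eta \<Delta> (-t) ** matrix_inv \<sigma>) *v (\<sigma> *v x))"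
    by (simp add: mv_neg matrix_vector_mul_assoc matrix_mul_assoc[symmetric] minv[OF inv(1)])
  then have 1: "int_vec (\<sigma> *v (- (eta \<Delta> (-t) *v x)))"
    using int_vec_neg[OF int_mat_vec[OF K ax(1)]] by simp
  show ?thesis using 1 ax2 lattice_iff[OF inv] by (simp add: at ginv_def)
qed

lemma Gmult_assoc: "Gmult \<Delta> (Gmult \<Delta> a b) c = Gmult \<Delta> a (Gmult \<Delta> b c)"
  by (simp add: Gmult_def eta_add matrix_vector_right_distrib matrix_vector_mul_assoc add.assoc)

lemma Gmult_lid: "Gmult \<Delta> (0, 0) a = a"
  by (simp add: Gmult_def eta_zero)

lemma Gmult_rinv: "Gmult \<Delta> a (ginv \<Delta> a) = (0, 0)"
  by (simp add: Gmult_def ginv_def mv_neg matrix_vector_mul_assoc eta_neg)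

lemma lattice_zero:
  "(0, 0) \<in> lattice \<sigma> \<rho>"
  unfolding lattice_def
  by (rule CollectI, rule exI[of _ 0], rule exI[of _ 0]) (simp add: int_vec_zero)

lemma coset_H:
  fixes \<Delta> :: "'m::finite \<Rightarrow> real^'n::finite^'n" and \<sigma> \<nu> :: "real^'n^'n" and \<rho> \<rho>' :: "real^'m^'m"
  assumes comp1: "G_compatible \<Delta> \<sigma> \<rho>" and comp2: "G_compatible \<Delta> \<nu> \<rho>'"
    and h: "h \<in> lattice \<sigma> \<rho> \<inter> lattice \<nu> \<rho>'"
  shows "Gmult \<Delta> h ` (lattice \<sigma> \<rho> \<inter> lattice \<nu> \<rho>') = lattice \<sigma> \<rho> \<inter> lattice \<nu> \<rho>'"
proof
  show "Gmult \<Delta> h ` (lattice \<sigma> \<rho> \<inter> lattice \<nu> \<rho>') \<subseteq> lattice \<sigma> \<rho> \<inter> lattice \<nu> \<rho>'"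
  proof (rule image_subsetI)
    fix y assume "y \<in> lattice \<sigma> \<rho> \<inter> lattice \<nu> \<rho>'"
    then show "Gmult \<Delta> h y \<in> lattice \<sigma> \<rho> \<inter> lattice \<nu> \<rho>'"
      using h Gmult_closed[OF comp1, of h y] Gmult_closed[OF comp2, of h y] by blast
  qed
next
  show "lattice \<sigma> \<rho> \<inter> lattice \<nu> \<rho>' \<subseteq> Gmult \<Delta> h ` (lattice \<sigma> \<rho> \<inter> lattice \<nu> \<rho>')"
  proof
    fix y assume y: "y \<in> lattice \<sigma> \<rho> \<inter> lattice \<nu> \<rho>'"
    have "y = Gmult \<Delta> h (Gmult \<Delta> (ginv \<Delta> h) y)"
      by (simp add: Gmult_assoc[symmetric] Gmult_rinv Gmult_lid)
    moreover have "Gmult \<Delta> (ginv \<Delta> h) y \<in> lattice \<sigma> \<rho> \<inter> lattice \<nu> \<rho>'"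
      using h y Gmult_closed[OF comp1, of "ginv \<Delta> h" y] Gmult_closed[OF comp2, of "ginv \<Delta> h" y]
        ginv_closed[OF comp1, of h] ginv_closed[OF comp2, of h]
      by blast
    ultimately show "y \<in> Gmult \<Delta> h ` (lattice \<sigma> \<rho> \<inter> lattice \<nu> \<rho>')" by blast
  qed
qed

lemma coset_assoc: "Gmult \<Delta> (Gmult \<Delta> a b) ` S = Gmult \<Delta> a ` (Gmult \<Delta> b ` S)"
  by (simp add: image_image Gmult_assoc)

lemma pigeon:
  fixes c :: "nat \<Rightarrow> 'a"
  assumes fin: "finite (lcosets g \<Gamma> H)" and c: "\<And>j. c j \<in> \<Gamma>"
  shows "\<exists>i j. i < j \<and> g (c i) ` H = g (c j) ` H"
proof -
  let ?f = "\<lambda>j::nat. g (c j) ` H"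
  have "range ?f \<subseteq> lcosets g \<Gamma> H" using c unfolding lcosets_def by blast
  then have "finite (range ?f)" using fin finite_subset by blast
  then have "\<not> inj ?f" using finite_imageD infinite_UNIV_nat by blast
  then obtain i j where ij: "i \<noteq> j" "?f i = ?f j" unfolding inj_def by blast
  show ?thesis
  proof (cases "i < j")
    case True then show ?thesis using ij by blast
  next
    case False then have "j < i" using ij by simp
    then show ?thesis using ij by metis
  qed
qed

lemma mv_column: "(A::real^'n::finite^'m::finite) *v column l B = column l (A ** B)"
  by (metis matrix_vector_mult_basis matrix_vector_mul_assoc)

lemma Gmult_rid: "Gmult \<Delta> a (0, 0) = a"
  by (simp add: Gmult_def)

lemma int_to_rat:
  assumes "k > 0" "real k * x \<in> \<int>" shows "x \<in> \<rat>"
proof -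
  have "x = (real k * x) / real k" using assms(1) by simp
  moreover have "real k * x \<in> \<rat>" using assms(2) Ints_subset_Rats by blast
  moreover have "real k \<in> \<rat>" by simp
  ultimately show ?thesis by (metis Rats_divide)
qed

lemma rat_dir:
  fixes \<Delta> :: "'m::finite \<Rightarrow> real^'n::finite^'n" and \<sigma> \<nu> :: "real^'n^'n" and \<rho> \<rho>' :: "real^'m^'m"
  assumes inv: "invertible \<sigma>" "invertible \<rho>" "invertible \<nu>" "invertible \<rho>'"
    and fin: "finite (lcosets (Gmult \<Delta>) (lattice \<sigma> \<rho>) (lattice \<sigma> \<rho> \<inter> lattice \<nu> \<rho>'))"
  shows "rat_mat (\<nu> ** matrix_inv \<sigma>) \<and> rat_mat (matrix_inv \<rho>' ** \<rho>)"
proof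
  let ?H = "lattice \<sigma> \<rho> \<inter> lattice \<nu> \<rho>'"
  have H0: "(0, 0) \<in> ?H" by (simp add: lattice_zero)
  show "rat_mat (\<nu> ** matrix_inv \<sigma>)" unfolding rat_mat_def
  proof (intro allI)
    fix r l
    define x where "x = matrix_inv \<sigma> *v axis l (1::real)"
    define c where "c j = (of_nat j *\<^sub>R x, 0::real^'m)" for j :: nat
    have "c j \<in> lattice \<sigma> \<rho>" for j
    proof -
      have "\<sigma> *v (of_nat j *\<^sub>R x) = of_nat j *\<^sub>R axis l 1"
        by (simp add: x_def matrix_vector_mult_scaleR matrix_vector_mul_assoc minv[OF inv(1)])
      then show ?thesis using lattice_iff[OF inv(1,2)]
        by (simp add: c_def int_vec_def axis_def)
    qed
    then obtain i j where ij: "i < j" "Gmult \<Delta> (c i) ` ?H = Gmult \<Delta> (c j) ` ?H"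
      using pigeon[OF fin] by blast
    have "c j \<in> Gmult \<Delta> (c j) ` ?H" using H0 Gmult_rid by (metis image_eqI)
    then have "c j \<in> Gmult \<Delta> (c i) ` ?H" using ij(2) by (simp only:)
    then obtain h where h: "h \<in> ?H" "c j = Gmult \<Delta> (c i) h" by (rule imageE) blast
    obtain h1 h2 where hh: "h = (h1, h2)" by (cases h)
    have "of_nat j *\<^sub>R x = of_nat i *\<^sub>R x + h1"
      using h(2) by (simp add: c_def Gmult_def hh eta_zero)
    then have h1: "h1 = of_nat (j - i) *\<^sub>R x" using ij(1)
      by (simp add: of_nat_diff scaleR_diff_left)
    have "int_vec (\<nu> *v h1)" using h(1) hh lattice_iff[OF inv(3,4)] by auto
    moreover have "\<nu> *v h1 = of_nat (j - i) *\<^sub>R column l (\<nu> ** matrix_inv \<sigma>)"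
      by (simp add: h1 x_def matrix_vector_mult_scaleR matrix_vector_mul_assoc matrix_vector_mult_basis mv_column)
    ultimately have "real (j - i) * (\<nu> ** matrix_inv \<sigma>) $ r $ l \<in> \<int>"
      unfolding int_vec_def by (metis column_def vec_lambda_beta vector_scaleR_component real_scaleR_def)
    then show "(\<nu> ** matrix_inv \<sigma>) $ r $ l \<in> \<rat>" using int_to_rat[of "j - i"] ij(1) by (simp only: zero_less_diff)
  qed
  show "rat_mat (matrix_inv \<rho>' ** \<rho>)" unfolding rat_mat_def
  proof (intro allI)
    fix r l
    define x where "x = \<rho> *v axis l (1::real)"
    define c where "c j = (0::real^'n, of_nat j *\<^sub>R x)" for j :: nat
    have "c j \<in> lattice \<sigma> \<rho>" for j
    proof -
      have "matrix_inv \<rho> *v (of_nat j *\<^sub>R x) = of_nat j *\<^sub>R axis l 1"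
        by (simp add: x_def matrix_vector_mult_scaleR matrix_vector_mul_assoc minv[OF inv(2)])
      then show ?thesis using lattice_iff[OF inv(1,2)]
        by (simp add: c_def int_vec_def axis_def)
    qed
    then obtain i j where ij: "i < j" "Gmult \<Delta> (c i) ` ?H = Gmult \<Delta> (c j) ` ?H"
      using pigeon[OF fin] by blast
    have "c j \<in> Gmult \<Delta> (c j) ` ?H" using H0 Gmult_rid by (metis image_eqI)
    then have "c j \<in> Gmult \<Delta> (c i) ` ?H" using ij(2) by (simp only:)
    then obtain h where h: "h \<in> ?H" "c j = Gmult \<Delta> (c i) h" by (rule imageE) blast
    obtain h1 h2 where hh: "h = (h1, h2)" by (cases h)
    have "of_nat j *\<^sub>R x = of_nat i *\<^sub>R x + h2"
      using h(2) by (simp add: c_def Gmult_def hh)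
    then have h2: "h2 = of_nat (j - i) *\<^sub>R x" using ij(1)
      by (simp add: of_nat_diff scaleR_diff_left)
    have "int_vec (matrix_inv \<rho>' *v h2)" using h(1) hh lattice_iff[OF inv(3,4)] by auto
    moreover have "matrix_inv \<rho>' *v h2 = of_nat (j - i) *\<^sub>R column l (matrix_inv \<rho>' ** \<rho>)"
      by (simp add: h2 x_def matrix_vector_mult_scaleR matrix_vector_mul_assoc matrix_vector_mult_basis mv_column)
    ultimately have "real (j - i) * (matrix_inv \<rho>' ** \<rho>) $ r $ l \<in> \<int>"
      unfolding int_vec_def by (metis column_def vec_lambda_beta vector_scaleR_component real_scaleR_def)
    then show "(matrix_inv \<rho>' ** \<rho>) $ r $ l \<in> \<rat>" using int_to_rat[of "j - i"] ij(1) by (simp only: zero_less_diff)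
  qed
qed

lemma common_denom:
  assumes "finite S" "S \<subseteq> \<rat>"
  shows "\<exists>D::int. D > 0 \<and> (\<forall>x\<in>S. (of_int D :: real) * x \<in> \<int>)"
  using assms
proof (induction S rule: finite_induct)
  case empty then show ?case by (intro exI[of _ 1]) simp
next
  case (insert x S)
  then obtain D where D: "D > 0" "\<forall>y\<in>S. (of_int D :: real) * y \<in> \<int>" by auto
  have "x \<in> \<rat>" using insert by auto
  then obtain a b where ab: "x = of_int a / of_int b" "b > 0" by (rule Rats_cases') blast
  have "(of_int (D * b) :: real) * x = of_int (D * a)" using ab by simp
  then have x1: "(of_int (D * b) :: real) * x \<in> \<int>" by (simp only: Ints_of_int)
  have y1: "(of_int (D * b) :: real) * y \<in> \<int>" if "y \<in> S" for y
  proof -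
    have "(of_int (D * b) :: real) * y = of_int b * (of_int D * y)" by simp
    then show ?thesis using D(2) that by (metis Ints_mult Ints_of_int)
  qed
  have "D * b > 0" using D(1) ab(2) by simp
  then show ?case using x1 y1 by blast
qed

definition md :: "int \<Rightarrow> real^'k \<Rightarrow> real^'k" where
  "md D w = (\<chi> k. of_int (\<lfloor>w $ k\<rfloor> mod D))"
definition dv :: "int \<Rightarrow> real^'k \<Rightarrow> real^'k" where
  "dv D w = (\<chi> k. of_int (\<lfloor>w $ k\<rfloor> div D))"

lemma md_dv: "int_vec w \<Longrightarrow> w = md D w + of_int D *\<^sub>R dv D w"
proof -
  assume w: "int_vec w"
  have "w $ k = of_int (\<lfloor>w $ k\<rfloor> mod D) + of_int D * of_int (\<lfloor>w $ k\<rfloor> div D)" for k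
  proof -
    have "w $ k = of_int \<lfloor>w $ k\<rfloor>" using w unfolding int_vec_def by (metis Ints_cases floor_of_int)
    also have "\<lfloor>w $ k\<rfloor> = \<lfloor>w $ k\<rfloor> mod D + D * (\<lfloor>w $ k\<rfloor> div D)" by simp
    finally show ?thesis by (metis of_int_add of_int_mult)
  qed
  then show ?thesis by (simp add: vec_eq_iff md_def dv_def)
qed

lemma int_vec_md: "int_vec (md D w)" unfolding int_vec_def md_def by simp
lemma int_vec_dv: "int_vec (dv D w)" unfolding int_vec_def dv_def by simp

lemma int_mat_scale:
  assumes "\<forall>j k. (of_int D :: real) * A $ j $ k \<in> \<int>"
  shows "int_mat ((of_int D :: real) *\<^sub>R A)"
  using assms unfolding int_mat_def by simp

lemma conj_cancel:
  fixes \<sigma> E F :: "real^'n::finite^'n"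
  assumes "invertible \<sigma>" "E ** F = mat 1"
  shows "E ** matrix_inv \<sigma> ** (\<sigma> ** F ** matrix_inv \<sigma>) = matrix_inv \<sigma>"
proof -
  have "E ** matrix_inv \<sigma> ** (\<sigma> ** F ** matrix_inv \<sigma>) = E ** (matrix_inv \<sigma> ** \<sigma>) ** F ** matrix_inv \<sigma>"
    by (simp add: matrix_mul_assoc)
  also have "\<dots> = matrix_inv \<sigma>" by (simp add: minv[OF assms(1)] assms(2))
  finally show ?thesis .
qed

lemma fin_dir:
  fixes \<Delta> :: "'m::finite \<Rightarrow> real^'n::finite^'n" and \<sigma> \<nu> :: "real^'n^'n" and \<rho> \<rho>' :: "real^'m^'m"
  assumes comp1: "G_compatible \<Delta> \<sigma> \<rho>" and comp2: "G_compatible \<Delta> \<nu> \<rho>'"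
    and rM: "rat_mat (\<nu> ** matrix_inv \<sigma>)" and rN: "rat_mat (matrix_inv \<rho>' ** \<rho>)"
  shows "finite (lcosets (Gmult \<Delta>) (lattice \<sigma> \<rho>) (lattice \<sigma> \<rho> \<inter> lattice \<nu> \<rho>'))"
proof -
  have inv: "invertible \<sigma>" "invertible \<rho>" using comp1 by (auto simp: G_compatible_def)
  have inv': "invertible \<nu>" "invertible \<rho>'" using comp2 by (auto simp: G_compatible_def)
  define M where "M = \<nu> ** matrix_inv \<sigma>"
  define N where "N = matrix_inv \<rho>' ** \<rho>"
  let ?H = "lattice \<sigma> \<rho> \<inter> lattice \<nu> \<rho>'"
  let ?S = "(\<lambda>(j,k). M $ j $ k) ` UNIV \<union> (\<lambda>(j,k). N $ j $ k) ` UNIV"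
  have "finite ?S" by simp
  moreover have "?S \<subseteq> \<rat>" using rM rN by (auto simp: rat_mat_def M_def N_def)
  ultimately obtain D :: int where D: "D > 0" "\<forall>x\<in>?S. (of_int D :: real) * x \<in> \<int>"
    using common_denom by blast
  have DM: "int_mat ((of_int D :: real) *\<^sub>R M)"
  proof (rule int_mat_scale, intro allI)
    fix j k
    have "M $ j $ k \<in> ?S" by (intro UnI1 image_eqI[where x="(j,k)"]) auto
    then show "(of_int D :: real) * M $ j $ k \<in> \<int>" using D(2) by blast
  qed
  have DN: "int_mat ((of_int D :: real) *\<^sub>R N)"
  proof (rule int_mat_scale, intro allI)
    fix j k
    have "N $ j $ k \<in> ?S" by (intro UnI2 image_eqI[where x="(j,k)"]) auto
    then show "(of_int D :: real) * N $ j $ k \<in> \<int>" using D(2) by blast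
  qed
  define R where "R = (\<lambda>(f, g). (matrix_inv \<sigma> *v (\<chi> k. of_int (f k)), \<rho> *v (\<chi> k. of_int (g k))))
     ` ((Pi\<^sub>E UNIV (\<lambda>_. {0..<D})) \<times> (Pi\<^sub>E UNIV (\<lambda>_. {0..<D})))"
  have finR: "finite R" unfolding R_def by (intro finite_imageI finite_cartesian_product finite_PiE) auto
  have cover: "Gmult \<Delta> a ` ?H \<in> (\<lambda>r. Gmult \<Delta> r ` ?H) ` R" if a: "a \<in> lattice \<sigma> \<rho>" for a
  proof -
    obtain x t where at: "a = (x, t)" by (cases a)
    define v where "v = \<sigma> *v x"
    define p where "p = matrix_inv \<rho> *v t"
    have iv: "int_vec v" "int_vec p" using a at lattice_iff[OF inv] by (auto simp: v_def p_def)
    define v0 where "v0 = md D v"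
    define w where "w = dv D v"
    define p0 where "p0 = md D p"
    define q where "q = dv D p"
    have vdec: "v = v0 + of_int D *\<^sub>R w" using md_dv[OF iv(1)] by (simp add: v0_def w_def)
    have pdec: "p = p0 + of_int D *\<^sub>R q" using md_dv[OF iv(2)] by (simp add: p0_def q_def)
    define r where "r = (matrix_inv \<sigma> *v v0, \<rho> *v p0)"
    have rR: "r \<in> R"
    proof -
      let ?f = "\<lambda>k. \<lfloor>v $ k\<rfloor> mod D" and ?g = "\<lambda>k. \<lfloor>p $ k\<rfloor> mod D"
      have "(?f, ?g) \<in> (Pi\<^sub>E UNIV (\<lambda>_. {0..<D})) \<times> (Pi\<^sub>E UNIV (\<lambda>_. {0..<D}))"
        using D(1) by (simp add: PiE_UNIV_domain)
      moreover have "r = (\<lambda>(f, g). (matrix_inv \<sigma> *v (\<chi> k. of_int (f k)), \<rho> *v (\<chi> k. of_int (g k)))) (?f, ?g)"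
        by (simp add: r_def v0_def p0_def md_def)
      ultimately show ?thesis unfolding R_def by blast
    qed
    define A where "A = \<sigma> ** eta \<Delta> (- (\<rho> *v p0)) ** matrix_inv \<sigma>"
    have iA: "int_mat A"
      using key_lemma[OF comp1 int_vec_neg[OF int_vec_md[of D p]]] by (simp add: A_def p0_def mv_neg)
    define w' where "w' = A *v w"
    have iw': "int_vec w'" unfolding w'_def w_def by (rule int_mat_vec[OF iA int_vec_dv])
    define k1 where "k1 = (matrix_inv \<sigma> *v (of_int D *\<^sub>R w'), 0::real^'m)"
    define k2 where "k2 = (0::real^'n, \<rho> *v (of_int D *\<^sub>R q))"
    have k1H: "k1 \<in> ?H"
    proof -
      have "\<sigma> *v (matrix_inv \<sigma> *v (of_int D *\<^sub>R w')) = of_int D *\<^sub>R w'"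
        by (simp add: matrix_vector_mul_assoc minv[OF inv(1)])
      moreover have "\<nu> *v (matrix_inv \<sigma> *v (of_int D *\<^sub>R w')) = (of_int D *\<^sub>R M) *v w'"
      proof -
        have "\<nu> *v (matrix_inv \<sigma> *v (of_int D *\<^sub>R w')) = of_int D *\<^sub>R ((\<nu> ** matrix_inv \<sigma>) *v w')"
          by (simp add: matrix_vector_mult_scaleR matrix_vector_mul_assoc)
        also have "\<dots> = (of_int D *\<^sub>R M) *v w'" unfolding M_def by (rule scaleR_matrix_vector_assoc)
        finally show ?thesis .
      qed
      ultimately show ?thesis
        using lattice_iff[OF inv] lattice_iff[OF inv'] int_vec_scale[OF iw'] int_mat_vec[OF DM iw'] int_vec_zero
        by (simp add: k1_def int_vec_zero)
    qed
    have k2H: "k2 \<in> ?H"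
    proof -
      have "matrix_inv \<rho> *v (\<rho> *v (of_int D *\<^sub>R q)) = of_int D *\<^sub>R q"
        by (simp add: matrix_vector_mul_assoc minv[OF inv(2)])
      moreover have "matrix_inv \<rho>' *v (\<rho> *v (of_int D *\<^sub>R q)) = (of_int D *\<^sub>R N) *v q"
      proof -
        have "matrix_inv \<rho>' *v (\<rho> *v (of_int D *\<^sub>R q)) = of_int D *\<^sub>R ((matrix_inv \<rho>' ** \<rho>) *v q)"
          by (simp add: matrix_vector_mult_scaleR matrix_vector_mul_assoc)
        also have "\<dots> = (of_int D *\<^sub>R N) *v q" unfolding N_def by (rule scaleR_matrix_vector_assoc)
        finally show ?thesis .
      qed
      ultimately show ?thesis
        using lattice_iff[OF inv] lattice_iff[OF inv'] int_vec_scale[OF int_vec_dv] int_mat_vec[OF DN int_vec_dv] int_vec_zero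
        by (simp add: k2_def q_def int_vec_zero int_vec_scale int_vec_dv)
    qed
    have "a = Gmult \<Delta> (Gmult \<Delta> r k1) k2"
    proof -
      have "eta \<Delta> (\<rho> *v p0) *v (matrix_inv \<sigma> *v (of_int D *\<^sub>R w')) = of_int D *\<^sub>R (matrix_inv \<sigma> *v w)"
      proof -
        have "eta \<Delta> (\<rho> *v p0) *v (matrix_inv \<sigma> *v (of_int D *\<^sub>R w')) =
              of_int D *\<^sub>R ((eta \<Delta> (\<rho> *v p0) ** matrix_inv \<sigma> ** A) *v w)"
          by (simp add: w'_def matrix_vector_mul_assoc matrix_vector_mult_scaleR matrix_mul_assoc)
        also have "eta \<Delta> (\<rho> *v p0) ** matrix_inv \<sigma> ** A = matrix_inv \<sigma>"
          unfolding A_def by (rule conj_cancel[OF inv(1) eta_neg(1)])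
        finally show ?thesis .
      qed
      then have 1: "fst (Gmult \<Delta> r k1) = x"
        by (simp add: Gmult_def r_def k1_def v_def vdec[symmetric] matrix_vector_mult_scaleR[symmetric]
            matrix_vector_right_distrib[symmetric] matrix_vector_mul_assoc minv[OF inv(1)])
      have 2: "snd (Gmult \<Delta> r k1) = \<rho> *v p0" by (simp add: Gmult_def r_def k1_def)
      have "\<rho> *v p0 + \<rho> *v (of_int D *\<^sub>R q) = t"
        by (simp add: matrix_vector_right_distrib[symmetric] pdec[symmetric] p_def
            matrix_vector_mul_assoc minv[OF inv(2)])
      then show ?thesis using 1 2 at
        by (metis (no_types, lifting) Gmult_def k2_def matrix_vector_mult_0_right add.right_neutral prod.collapse fst_conv snd_conv)
    qed
    then have "Gmult \<Delta> a ` ?H = Gmult \<Delta> r ` ?H"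
      by (simp add: coset_assoc coset_H[OF comp1 comp2 k1H] coset_H[OF comp1 comp2 k2H])
    then show ?thesis using rR by blast
  qed
  have "lcosets (Gmult \<Delta>) (lattice \<sigma> \<rho>) ?H \<subseteq> (\<lambda>r. Gmult \<Delta> r ` ?H) ` R"
    unfolding lcosets_def using cover by blast
  then show ?thesis using finR finite_subset by blast
qed

lemma prod_inv:
  fixes A B :: "real^'n::finite^'n"
  assumes "invertible A" "invertible B"
  shows "(A ** matrix_inv B) ** (B ** matrix_inv A) = mat 1"
proof -
  have "(A ** matrix_inv B) ** (B ** matrix_inv A) = A ** (matrix_inv B ** B) ** matrix_inv A"
    by (simp add: matrix_mul_assoc)
  also have "\<dots> = mat 1" by (simp add: minv[OF assms(1)] minv[OF assms(2)])
  finally show ?thesis .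
qed

lemma prod_inv2:
  fixes A B :: "real^'n::finite^'n"
  assumes "invertible A" "invertible B"
  shows "(matrix_inv A ** B) ** (matrix_inv B ** A) = mat 1"
proof -
  have "(matrix_inv A ** B) ** (matrix_inv B ** A) = matrix_inv A ** (B ** matrix_inv B) ** A"
    by (simp add: matrix_mul_assoc)
  also have "\<dots> = mat 1" by (simp add: minv[OF assms(1)] minv[OF assms(2)])
  finally show ?thesis .
qed

theorem mainTheorem5:
  fixes \<Delta> :: "'m::finite \<Rightarrow> real^'n::finite^'n"
    and \<sigma> \<nu> :: "real^'n^'n" and \<rho> \<rho>' :: "real^'m^'m"
  assumes "CARD('m) \<le> CARD('n)"
    and diag: "\<forall>i. is_diag_mat (\<Delta> i)"
    and traceless: "\<forall>i. trace (\<Delta> i) = 0"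
    and nonsing: "\<forall>i. invertible (\<Delta> i)"
    and linindep: "\<forall>c::'m \<Rightarrow> real. (\<Sum>i\<in>UNIV. c i *\<^sub>R \<Delta> i) = 0 \<longrightarrow> (\<forall>i. c i = 0)"
    and distinct: "\<forall>i j k. j \<noteq> k \<longrightarrow> \<Delta> i $ j $ j \<noteq> \<Delta> i $ k $ k"
    and comp1: "G_compatible \<Delta> \<sigma> \<rho>"
    and comp2: "G_compatible \<Delta> \<nu> \<rho>'"
  shows "commensurable (Gmult \<Delta>) (lattice \<sigma> \<rho>) (lattice \<nu> \<rho>') \<longleftrightarrow>
           rat_mat (\<nu> ** matrix_inv \<sigma>) \<and> rat_mat (matrix_inv \<rho>' ** \<rho>)"
proof
  have inv: "invertible \<sigma>" "invertible \<rho>" using comp1 by (auto simp: G_compatible_def)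
  have inv': "invertible \<nu>" "invertible \<rho>'" using comp2 by (auto simp: G_compatible_def)
  {
    assume "commensurable (Gmult \<Delta>) (lattice \<sigma> \<rho>) (lattice \<nu> \<rho>')"
    then have "finite (lcosets (Gmult \<Delta>) (lattice \<sigma> \<rho>) (lattice \<sigma> \<rho> \<inter> lattice \<nu> \<rho>'))"
      by (simp add: commensurable_def)
    then show "rat_mat (\<nu> ** matrix_inv \<sigma>) \<and> rat_mat (matrix_inv \<rho>' ** \<rho>)"
      by (rule rat_dir[OF inv inv'])
  }
  {
    assume r: "rat_mat (\<nu> ** matrix_inv \<sigma>) \<and> rat_mat (matrix_inv \<rho>' ** \<rho>)"
    have r2: "rat_mat (\<sigma> ** matrix_inv \<nu>)"
      using rat_inv[OF conjunct1[OF r] prod_inv[OF inv'(1) inv(1)]] .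
    have r3: "rat_mat (matrix_inv \<rho> ** \<rho>')"
      using rat_inv[OF conjunct2[OF r] prod_inv2[OF inv'(2) inv(2)]] .
    have f1: "finite (lcosets (Gmult \<Delta>) (lattice \<sigma> \<rho>) (lattice \<sigma> \<rho> \<inter> lattice \<nu> \<rho>'))"
      using fin_dir[OF comp1 comp2] r by blast
    have f2: "finite (lcosets (Gmult \<Delta>) (lattice \<nu> \<rho>') (lattice \<nu> \<rho>' \<inter> lattice \<sigma> \<rho>))"
      using fin_dir[OF comp2 comp1 r2 r3] .
    show "commensurable (Gmult \<Delta>) (lattice \<sigma> \<rho>) (lattice \<nu> \<rho>')"
      unfolding commensurable_def using f1 f2 by (simp add: Int_commute)
  }
qed

end
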